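(* Let $a>1$ and $b>1$ be irrational numbers, let $a_n=[an]$, $b_n=[bn]$, $a'_n=[a^{-1}n]$ and $b'_n=[b^{-1}n]$. Then for every positive integer $k$ the series $\sum_{n=1}^\infty \left( \frac{a_{n+k}}{a_n}-\frac{b_{n+k}}{b_n} \right)$ converges and \begin{align*} \sum_{n=1}^\infty \left( \frac{a_{n+k}}{a_n}-\frac{b_{n+k}}{b_n} \right)=\;& k\left( \log a -\log b\right) + \sum_{j=1}^{k}\left(\left\{ j\{ a \}\right\} - \left\{ j\{ b \}\right\}\right)\\ &-\sum_{n=1}^{\infty} \frac{ak\{ a^{-1} (n+1) \}-bk\{ b^{-1} (n+1) \}}{n(n+1)}\\ &-\sum_{n=1}^{\infty} \frac{\sum_{j=1}^k\{ \{ a\} (a'_{n+1}+j) \}-\sum_{j=1}^k\{ \{ b\} (b'_{n+1}+j) \}}{n(n+1)}. \end{align*}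
   Context: $[x]$ is the greatest integer not exceeding $x$ and $\{x\}=x-[x]$. *)

theory Defs
  imports "HOL-Analysis.Analysis"
begin

end

theory Submission
  imports Defs
begin

lemma frac_fa: "frac (frac a * real (m::nat)) = a * real m - of_int \<lfloor>a * real m\<rfloor>"
proof -
  have "frac a * real m = a * real m - of_int (\<lfloor>a\<rfloor> * int m)" by (simp add: frac_def algebra_simps)
  moreover have "\<lfloor>a * real m - of_int (\<lfloor>a\<rfloor> * int m)\<rfloor> = \<lfloor>a * real m\<rfloor> - \<lfloor>a\<rfloor> * int m"
    by (rule floor_diff_of_int)
  ultimately show ?thesis unfolding frac_def[of "frac a * real m"] by simp
qed

lemma summ_bdd:
  assumes "\<And>m. \<bar>f m\<bar> \<le> C"
  shows "summable (\<lambda>m. f m / (real (Suc m) * real (Suc m + 1)))"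
proof (rule summable_comparison_test'[where g="\<lambda>m. C * inverse (real (Suc m) ^ 2)"])
  show "summable (\<lambda>m. C * inverse (real (Suc m) ^ 2))"
    apply (rule summable_mult)
    using summable_Suc_iff[of "\<lambda>n. inverse (real n ^ 2)"] inverse_power_summable[of 2, where 'a=real]
    by simp
  fix m :: nat
  have p: "real (Suc m) ^ 2 \<le> real (Suc m) * real (Suc m + 1)" by (simp add: power2_eq_square)
  have "norm (f m / (real (Suc m) * real (Suc m + 1))) = \<bar>f m\<bar> / (real (Suc m) * real (Suc m + 1))"
    by (simp add: abs_mult)
  also have "\<dots> \<le> C / (real (Suc m) * real (Suc m + 1))"
    by (intro divide_right_mono assms) simp
  also have "\<dots> \<le> C / real (Suc m) ^ 2"
    using assms[of m] by (intro divide_left_mono p) auto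
  finally show "norm (f m / (real (Suc m) * real (Suc m + 1))) \<le> C * inverse (real (Suc m) ^ 2)"
    by (simp add: field_simps)
qed

definition pa :: "real \<Rightarrow> nat \<Rightarrow> nat" where "pa a n = nat \<lfloor>inverse a * real n\<rfloor>"
definition ya :: "real \<Rightarrow> nat \<Rightarrow> nat \<Rightarrow> real" where
  "ya a k n = a * real k * frac (inverse a * real n)
     + (\<Sum>j=1..k. frac (frac a * (real_of_int \<lfloor>inverse a * real n\<rfloor> + real j)))"

lemma pa_real: "a > 0 \<Longrightarrow> real_of_int \<lfloor>inverse a * real n\<rfloor> = real (pa a n)"
  unfolding pa_def by simp

lemma ya_eq:
  assumes "a > 0"
  shows "ya a k n = real k * real n + a * (\<Sum>j=1..k. real j)
           - (\<Sum>j=1..k. real_of_int \<lfloor>a * real (pa a n + j)\<rfloor>)"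
proof -
  define p where "p = pa a n"
  have pr: "real_of_int \<lfloor>inverse a * real n\<rfloor> = real p" using pa_real[OF assms] p_def by simp
  have fr: "frac (inverse a * real n) = inverse a * real n - real p"
    using pr by (simp add: frac_def)
  have "(\<Sum>j=1..k. frac (frac a * (real_of_int \<lfloor>inverse a * real n\<rfloor> + real j)))
      = (\<Sum>j=1..k. a * real p + a * real j - real_of_int \<lfloor>a * real (p + j)\<rfloor>)"
    apply (rule sum.cong[OF refl])
    using frac_fa[of a "p + _"] pr by (simp add: algebra_simps)
  also have "\<dots> = real k * a * real p + a * (\<Sum>j=1..k. real j) - (\<Sum>j=1..k. real_of_int \<lfloor>a * real (p + j)\<rfloor>)"
    by (simp add: sum.distrib sum_subtractf sum_distrib_left)
  finally have S: "(\<Sum>j=1..k. frac (frac a * (real_of_int \<lfloor>inverse a * real n\<rfloor> + real j)))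
     = real k * a * real p + a * (\<Sum>j=1..k. real j) - (\<Sum>j=1..k. real_of_int \<lfloor>a * real (p + j)\<rfloor>)" .
  have "ya a k n = a * real k * (inverse a * real n - real p) + (real k * a * real p + a * (\<Sum>j=1..k. real j) - (\<Sum>j=1..k. real_of_int \<lfloor>a * real (p + j)\<rfloor>))"
    unfolding ya_def fr S ..
  also have "a * real k * (inverse a * real n - real p) = real k * real n - real k * a * real p"
    using assms by (simp add: algebra_simps)
  finally show ?thesis unfolding p_def by simp
qed

lemma irr_mult: assumes "a \<notin> \<rat>" "q > 0" shows "a * real q \<noteq> of_int z"
proof
  assume h: "a * real q = of_int z"
  have "a = of_int z / real q" using h assms(2) by (simp add: field_simps)
  then have "a \<in> \<rat>" by simp
  then show False using assms(1) by simp
qed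

lemma pa_step:
  assumes "a > 1" "a \<notin> \<rat>"
  shows "pa a (Suc n) = pa a n \<or> (pa a (Suc n) = Suc (pa a n) \<and> \<lfloor>a * real (pa a (Suc n))\<rfloor> = int n)"
proof -
  define x where "x = inverse a * real n"
  define y where "y = inverse a * real (Suc n)"
  have y: "y = x + inverse a" unfolding x_def y_def by (simp add: algebra_simps)
  have ia: "0 < inverse a" "inverse a < 1" using assms(1) by (auto simp: inverse_less_1_iff)
  have x0: "x \<ge> 0" unfolding x_def using assms(1) by simp
  have "\<lfloor>x\<rfloor> \<le> \<lfloor>y\<rfloor>" using y ia by (intro floor_mono) simp
  moreover have "\<lfloor>y\<rfloor> \<le> \<lfloor>x\<rfloor> + 1"
    using y ia floor_correct[of x] floor_correct[of y] by linarith
  ultimately consider "\<lfloor>y\<rfloor> = \<lfloor>x\<rfloor>" | "\<lfloor>y\<rfloor> = \<lfloor>x\<rfloor> + 1" by linarith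
  then show ?thesis
  proof cases
    case 1 then show ?thesis unfolding pa_def x_def y_def by simp
  next
    case 2
    have fx: "\<lfloor>x\<rfloor> \<ge> 0" using x0 by simp
    define q where "q = nat (\<lfloor>x\<rfloor> + 1)"
    have q: "real q = of_int \<lfloor>y\<rfloor>" using 2 fx unfolding q_def by simp
    have q0: "q > 0" using fx unfolding q_def by simp
    have "real q \<le> y" using q by simp
    then have le: "a * real q \<le> real n + 1" unfolding y_def using assms(1) by (simp add: field_simps)
    have "real q > x" using q 2 floor_correct[of x] by linarith
    then have gt: "a * real q > real n" unfolding x_def using assms(1) by (simp add: field_simps)
    have "a * real q \<noteq> of_int (int n + 1)" using irr_mult[OF assms(2) q0] by blast
    with le have "a * real q < real n + 1" by simp
    with gt have fl: "\<lfloor>a * real q\<rfloor> = int n" by (simp add: floor_eq_iff)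
    have "pa a (Suc n) = q" unfolding pa_def q_def using 2 y_def by simp
    moreover have "pa a n = nat \<lfloor>x\<rfloor>" unfolding pa_def x_def by simp
    ultimately show ?thesis using fl fx q_def by (simp add: nat_add_distrib add.commute)
  qed
qed

definition Aa :: "real \<Rightarrow> nat \<Rightarrow> real" where "Aa a q = real_of_int \<lfloor>a * real q\<rfloor>"
definition Da :: "real \<Rightarrow> nat \<Rightarrow> nat \<Rightarrow> real" where "Da a k Q = (\<Sum>q=1..Q. Aa a (q + k) / Aa a q - 1)"
definition wa :: "real \<Rightarrow> nat \<Rightarrow> nat \<Rightarrow> real" where
  "wa a k m = ya a k (Suc m + 1) / (real (Suc m) * real (Suc m + 1))"

lemma telesc: "(\<Sum>j=1..k. g (Suc p + j) - g (p + j)) = g (Suc p + k) - (g (Suc p) :: real)"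
  by (induction k) auto

lemma ya_step:
  assumes "a > 1" "a \<notin> \<rat>"
  shows "(pa a (Suc n) = pa a n \<and> ya a k (Suc n) = ya a k n + real k) \<or>
         (pa a (Suc n) = Suc (pa a n) \<and> Aa a (pa a (Suc n)) = real n \<and>
          ya a k (Suc n) = ya a k n + real k - (Aa a (pa a (Suc n) + k) - Aa a (pa a (Suc n))))"
proof -
  have a0: "a > 0" using assms by simp
  from pa_step[OF assms, of n] show ?thesis
  proof
    assume h: "pa a (Suc n) = pa a n"
    then show ?thesis using ya_eq[OF a0, of k n] ya_eq[OF a0, of k "Suc n"] by (simp add: algebra_simps)
  next
    assume h: "pa a (Suc n) = Suc (pa a n) \<and> \<lfloor>a * real (pa a (Suc n))\<rfloor> = int n"
    define g where "g = (\<lambda>i. real_of_int \<lfloor>a * real i\<rfloor>)"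
    have t: "(\<Sum>j=1..k. g (Suc (pa a n) + j)) - (\<Sum>j=1..k. g (pa a n + j)) = g (Suc (pa a n) + k) - g (Suc (pa a n))"
      using telesc[of g "pa a n" k] by (simp add: sum_subtractf)
    have "ya a k (Suc n) = ya a k n + real k - (g (Suc (pa a n) + k) - g (Suc (pa a n)))"
      using ya_eq[OF a0, of k n] ya_eq[OF a0, of k "Suc n"] h t unfolding g_def
      by (simp add: algebra_simps)
    then have y: "ya a k (Suc n) = ya a k n + real k - (Aa a (pa a (Suc n) + k) - Aa a (pa a (Suc n)))"
      using h unfolding g_def Aa_def by simp
    have "Aa a (pa a (Suc n)) = real n" using h unfolding Aa_def by (metis of_int_of_nat_eq)
    then show ?thesis using h y by blast
  qed
qed

lemma alg1:
  fixes n :: real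
  assumes "n > 0" "Y2 = Y1 + k - c * n" "D' = D + c" "S = y1 + k * h - Y1 / n - D"
  shows "S + Y2 / (n * (n + 1)) = y1 + k * (h + 1 / n) - Y2 / (n + 1) - D'"
proof -
  have n1: "n + 1 > 0" using assms(1) by simp
  have Y1: "Y1 = Y2 + c * n - k" using assms(2) by simp
  have e1: "Y2 / (n * (n + 1)) + Y2 / (n + 1) = Y2 / n" using assms(1) n1 by (simp add: divide_simps) (simp add: algebra_simps)
  have e2: "(Y2 + c * n - k) / n = Y2 / n + c - k / n" using assms(1) by (simp add: field_simps)
  have e3: "k * (h + 1 / n) = k * h + k / n" by (simp add: algebra_simps)
  show ?thesis unfolding assms(3,4) Y1 e3 using e1 e2 by linarith
qed

lemma W_eq:
  assumes "a > 1" "a \<notin> \<rat>"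
  shows "(\<Sum>m<M. wa a k m) = ya a k 1 + real k * harm M - ya a k (M + 1) / real (M + 1) - Da a k (pa a (M + 1))"
proof (induction M)
  case 0
  have "pa a 1 = 0" unfolding pa_def using assms(1) by (simp add: inverse_less_1_iff)
  then show ?case by (simp add: Da_def harm_def)
next
  case (Suc M)
  have e: "(\<Sum>m<Suc M. wa a k m) = (\<Sum>m<M. wa a k m) + ya a k (Suc (Suc M)) / (real (Suc M) * (real (Suc M) + 1))"
    by (simp add: wa_def)
  have h: "harm (Suc M) = harm M + 1 / real (Suc M)" by (simp add: harm_Suc field_simps)
  have r: "real (Suc M + 1) = real (Suc M) + 1" by simp
  have n0: "real (Suc M) > 0" by simp
  have r2: "real (Suc (Suc M)) = real (Suc M) + 1" by simp
  have IH: "(\<Sum>m<M. wa a k m) = ya a k 1 + real k * harm M - ya a k (Suc M) / real (Suc M) - Da a k (pa a (Suc M))"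
    using Suc by simp
  have G: "?case \<longleftrightarrow> (\<Sum>m<M. wa a k m) + ya a k (Suc (Suc M)) / (real (Suc M) * (real (Suc M) + 1)) =
     ya a k 1 + real k * (harm M + 1 / real (Suc M)) - ya a k (Suc (Suc M)) / (real (Suc M) + 1) - Da a k (pa a (Suc (Suc M)))"
    unfolding e h by simp
  from ya_step[OF assms, of "Suc M" k] show ?case
  proof
    assume s: "pa a (Suc (Suc M)) = pa a (Suc M) \<and> ya a k (Suc (Suc M)) = ya a k (Suc M) + real k"
    show ?thesis unfolding G
      by (rule alg1[OF n0 _ _ IH, where c=0]) (use s in auto)
  next
    assume s: "pa a (Suc (Suc M)) = Suc (pa a (Suc M)) \<and> Aa a (pa a (Suc (Suc M))) = real (Suc M) \<and>
          ya a k (Suc (Suc M)) = ya a k (Suc M) + real k - (Aa a (pa a (Suc (Suc M)) + k) - Aa a (pa a (Suc (Suc M))))"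
    have d: "Da a k (pa a (Suc (Suc M))) = Da a k (pa a (Suc M)) + (Aa a (pa a (Suc (Suc M)) + k) - Aa a (pa a (Suc (Suc M)))) / real (Suc M)"
    proof -
      define p where "p = pa a (Suc M)"
      have q: "pa a (Suc (Suc M)) = Suc p" "Aa a (Suc p) = real (Suc M)" using s p_def by auto
      have "Da a k (Suc p) = Da a k p + (Aa a (Suc p + k) / Aa a (Suc p) - 1)" by (simp add: Da_def)
      also have "Aa a (Suc p + k) / Aa a (Suc p) - 1 = (Aa a (Suc p + k) - Aa a (Suc p)) / real (Suc M)"
        unfolding q(2) by (simp add: diff_divide_distrib)
      finally show ?thesis unfolding q(1) p_def by simp
    qed
    show ?thesis unfolding G
      by (rule alg1[OF n0 _ d IH]) (use s in auto)
  qed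
qed

lemma ya_bdd: assumes "a > 0" shows "0 \<le> ya a k n" "ya a k n \<le> a * real k + real k"
proof -
  define s where "s = (\<Sum>j=1..k. frac (frac a * (real_of_int \<lfloor>inverse a * real n\<rfloor> + real j)))"
  have s0: "0 \<le> s" unfolding s_def by (intro sum_nonneg) simp
  have "s \<le> (\<Sum>j=1..k. 1)" unfolding s_def by (intro sum_mono) (simp add: less_imp_le frac_lt_1)
  then have s1: "s \<le> real k" by simp
  have f0: "0 \<le> frac (inverse a * real n)" "frac (inverse a * real n) \<le> 1"
    by (simp_all add: less_imp_le frac_lt_1)
  have "0 \<le> a * real k * frac (inverse a * real n)" using assms f0 by simp
  moreover have "a * real k * frac (inverse a * real n) \<le> a * real k * 1"
    using assms f0 by (intro mult_left_mono) auto
  ultimately show "0 \<le> ya a k n" "ya a k n \<le> a * real k + real k"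
    using s0 s1 unfolding ya_def s_def[symmetric] by auto
qed

lemma wa_summable: assumes "a > 0" shows "summable (wa a k)"
proof -
  have "summable (\<lambda>m. ya a k (Suc m + 1) / (real (Suc m) * real (Suc m + 1)))"
  proof (rule summ_bdd[where C="a * real k + real k"])
    fix m
    have "0 \<le> ya a k (Suc m + 1)" "ya a k (Suc m + 1) \<le> a * real k + real k" by (rule ya_bdd[OF assms])+
    then show "\<bar>ya a k (Suc m + 1)\<bar> \<le> a * real k + real k" by simp
  qed
  then show ?thesis unfolding wa_def[abs_def] .
qed

definition fa :: "real \<Rightarrow> nat \<Rightarrow> nat" where "fa a Q = nat \<lfloor>a * real Q\<rfloor>"

lemma fa_ge: "a \<ge> 1 \<Longrightarrow> Q \<le> fa a Q"
proof -
  assume a: "a \<ge> 1"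
  have "real Q \<le> a * real Q" using a by (simp add: mult_le_cancel_right1)
  then have "int Q \<le> \<lfloor>a * real Q\<rfloor>" by (simp add: le_floor_iff)
  then show ?thesis unfolding fa_def by simp
qed

lemma pa_fa:
  assumes "a > 1" "a \<notin> \<rat>"
  shows "pa a (fa a Q + 1) = Q"
proof (cases "Q = 0")
  case True
  then show ?thesis using assms(1) by (simp add: pa_def fa_def inverse_less_1_iff)
next
  case False
  have ne: "a * real Q \<noteq> of_int \<lfloor>a * real Q\<rfloor>" using irr_mult[OF assms(2)] False by simp
  have f0: "\<lfloor>a * real Q\<rfloor> \<ge> 0" using assms(1) by simp
  have r: "real (fa a Q) = of_int \<lfloor>a * real Q\<rfloor>" unfolding fa_def using f0 by simp
  have l1: "real (fa a Q) < a * real Q" using r ne floor_correct[of "a * real Q"] by linarith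
  have l2: "a * real Q < real (fa a Q) + 1" using r floor_correct[of "a * real Q"] by linarith
  have ia: "inverse a < 1" using assms(1) by (simp add: inverse_less_1_iff)
  have a0: "a > 0" using assms(1) by simp
  have u1: "real Q < inverse a * real (fa a Q + 1)" using l2 a0 by (simp add: field_simps)
  have "inverse a * real (fa a Q + 1) < inverse a * (a * real Q) + inverse a"
    using l1 a0 by (simp add: algebra_simps)
  moreover have "inverse a * (a * real Q) = real Q" using a0 by simp
  ultimately have u2: "inverse a * real (fa a Q + 1) < real Q + 1" using ia by linarith
  have "\<lfloor>inverse a * real (fa a Q + 1)\<rfloor> = int Q" using u1 u2 by (simp add: floor_eq_iff)
  then show ?thesis unfolding pa_def by simp
qed

lemma partial_c:
  "(\<Sum>m<Q. Aa a (Suc m + k) / Aa a (Suc m) - 1 - real k / real (Suc m)) = Da a k Q - real k * harm Q"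
  by (induction Q) (simp_all add: Da_def harm_def algebra_simps divide_inverse)

lemma fa_filterlim: "a \<ge> 1 \<Longrightarrow> filterlim (fa a) at_top sequentially"
  by (rule filterlim_at_top_mono[OF filterlim_ident]) (use fa_ge in auto)

lemma fa_ratio: assumes "a > 1" shows "(\<lambda>Q. real (fa a Q) / real Q) \<longlonglongrightarrow> a"
proof (rule tendsto_sandwich[where f="\<lambda>Q. a - 1 / real Q" and h="\<lambda>Q. a"])
  have f0: "\<And>Q. \<lfloor>a * real Q\<rfloor> \<ge> 0" using assms by simp
  have r: "\<And>Q. real (fa a Q) = of_int \<lfloor>a * real Q\<rfloor>" unfolding fa_def using f0 by simp
  show "\<forall>\<^sub>F Q in sequentially. a - 1 / real Q \<le> real (fa a Q) / real Q"
    using eventually_gt_at_top[of 0]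
  proof eventually_elim
    case (elim Q)
    have h: "a * real Q - 1 \<le> real (fa a Q)" using r[of Q] floor_correct[of "a * real Q"] by linarith
    have "a - 1 / real Q = (a * real Q - 1) / real Q" using elim by (simp add: field_simps)
    also have "\<dots> \<le> real (fa a Q) / real Q" by (rule divide_right_mono[OF h]) simp
    finally show ?case .
  qed
  show "\<forall>\<^sub>F Q in sequentially. real (fa a Q) / real Q \<le> a"
    using eventually_gt_at_top[of 0]
  proof eventually_elim
    case (elim Q)
    have "real (fa a Q) \<le> a * real Q" using r[of Q] floor_correct[of "a * real Q"] by linarith
    then show ?case using elim by (simp add: field_simps)
  qed
  show "(\<lambda>Q. a - 1 / real Q) \<longlonglongrightarrow> a"
    using tendsto_diff[OF tendsto_const[of a] lim_const_over_n[of 1]] by simp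
qed simp

lemma harm_lim: assumes "a > 1" shows "(\<lambda>Q. harm (fa a Q) - harm Q) \<longlonglongrightarrow> ln a"
proof -
  have l1: "(\<lambda>Q. harm (fa a Q) - ln (real (fa a Q))) \<longlonglongrightarrow> euler_mascheroni"
    by (rule filterlim_compose[OF euler_mascheroni_LIMSEQ fa_filterlim]) (use assms in simp)
  have l3: "(\<lambda>Q. ln (real (fa a Q) / real Q)) \<longlonglongrightarrow> ln a"
    by (rule tendsto_ln[OF fa_ratio[OF assms]]) (use assms in simp)
  have l: "(\<lambda>Q. (harm (fa a Q) - ln (real (fa a Q))) - (harm Q - ln (real Q)) + ln (real (fa a Q) / real Q))
      \<longlonglongrightarrow> euler_mascheroni - euler_mascheroni + ln a"
    by (intro tendsto_intros l1 l3 euler_mascheroni_LIMSEQ)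
  show ?thesis
  proof (rule Lim_transform_eventually[OF l[simplified]])
    show "\<forall>\<^sub>F Q in sequentially. harm (fa a Q) - ln (real (fa a Q)) - (harm Q - ln (real Q)) + ln (real (fa a Q) / real Q)
        = harm (fa a Q) - harm Q"
      using eventually_gt_at_top[of 0]
    proof eventually_elim
      case (elim Q)
      have "Q \<le> fa a Q" using fa_ge assms by simp
      then have "real (fa a Q) > 0" using elim by simp
      then show ?case using elim by (simp add: ln_div)
    qed
  qed
qed

lemma ya1: assumes "a > 1" shows "ya a k 1 = real k + (\<Sum>j=1..k. frac (real j * frac a))"
proof -
  have ia: "0 < inverse a" "inverse a < 1" using assms by (auto simp: inverse_less_1_iff)
  then have "\<lfloor>inverse a\<rfloor> = 0" by (simp add: floor_eq_iff)
  moreover have "frac (inverse a) = inverse a" using ia by (simp add: frac_eq)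
  ultimately show ?thesis using assms unfolding ya_def by (simp add: mult.commute)
qed

lemma key:
  assumes "a > 1" "a \<notin> \<rat>"
  shows "(\<lambda>m. Aa a (Suc m + k) / Aa a (Suc m) - 1 - real k / real (Suc m)) sums
           (real k + real k * ln a + (\<Sum>j=1..k. frac (real j * frac a)) - suminf (wa a k))"
  unfolding sums_def
proof -
  have a0: "a > 0" using assms by simp
  define C where "C = a * real k + real k"
  have eq: "(\<Sum>m<Q. Aa a (Suc m + k) / Aa a (Suc m) - 1 - real k / real (Suc m))
    = ya a k 1 + real k * (harm (fa a Q) - harm Q) - (\<Sum>m<fa a Q. wa a k m) - ya a k (fa a Q + 1) / real (fa a Q + 1)" for Q
    unfolding partial_c W_eq[OF assms, of k "fa a Q"] pa_fa[OF assms] by (simp add: algebra_simps)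
  have L1: "(\<lambda>Q. \<Sum>m<fa a Q. wa a k m) \<longlonglongrightarrow> suminf (wa a k)"
    by (rule filterlim_compose[OF summable_LIMSEQ[OF wa_summable[OF a0]] fa_filterlim]) (use assms in simp)
  have L2: "(\<lambda>Q. ya a k (fa a Q + 1) / real (fa a Q + 1)) \<longlonglongrightarrow> 0"
  proof (rule Lim_null_comparison)
    show "(\<lambda>Q. C / real (Suc Q)) \<longlonglongrightarrow> 0" using LIMSEQ_Suc[OF lim_const_over_n[of C]] by simp
    show "\<forall>\<^sub>F Q in sequentially. norm (ya a k (fa a Q + 1) / real (fa a Q + 1)) \<le> C / real (Suc Q)"
    proof (rule always_eventually, rule allI)
      fix Q
      have b: "0 \<le> ya a k (fa a Q + 1)" "ya a k (fa a Q + 1) \<le> C" unfolding C_def by (rule ya_bdd[OF a0])+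
      have "Q \<le> fa a Q" using fa_ge assms by simp
      then have le: "real (Suc Q) \<le> real (fa a Q + 1)" by simp
      have "norm (ya a k (fa a Q + 1) / real (fa a Q + 1)) = ya a k (fa a Q + 1) / real (fa a Q + 1)"
        using b by simp
      also have "\<dots> \<le> C / real (fa a Q + 1)" by (rule divide_right_mono[OF b(2)]) simp
      also have "\<dots> \<le> C / real (Suc Q)" by (rule divide_left_mono[OF le]) (use b in auto)
      finally show "norm (ya a k (fa a Q + 1) / real (fa a Q + 1)) \<le> C / real (Suc Q)" .
    qed
  qed
  have "(\<lambda>Q. ya a k 1 + real k * (harm (fa a Q) - harm Q) - (\<Sum>m<fa a Q. wa a k m) - ya a k (fa a Q + 1) / real (fa a Q + 1))
     \<longlonglongrightarrow> ya a k 1 + real k * ln a - suminf (wa a k) - 0"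
    by (intro tendsto_intros L1 L2 harm_lim[OF assms(1)])
  then show "(\<lambda>Q. \<Sum>m<Q. Aa a (Suc m + k) / Aa a (Suc m) - 1 - real k / real (Suc m)) \<longlonglongrightarrow>
     real k + real k * ln a + (\<Sum>j=1..k. frac (real j * frac a)) - suminf (wa a k)"
    unfolding eq ya1[OF assms(1)] by (simp add: algebra_simps)
qed

lemma sumfr_bdd: "0 \<le> (\<Sum>j=1..k. frac (f j :: real))" "(\<Sum>j=1..k. frac (f j)) \<le> real k"
proof -
  show "0 \<le> (\<Sum>j=1..k. frac (f j :: real))" by (intro sum_nonneg) simp
  have "(\<Sum>j=1..k. frac (f j)) \<le> (\<Sum>j=1..k. 1)" by (intro sum_mono) (simp add: less_imp_le frac_lt_1)
  then show "(\<Sum>j=1..k. frac (f j)) \<le> real k" by simp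
qed

theorem theorem3:
  fixes a b :: real and k :: nat
  assumes "a > 1" and "b > 1" and "a \<notin> \<rat>" and "b \<notin> \<rat>" and "k > 0"
  defines "A \<equiv> (\<lambda>n::nat. real_of_int \<lfloor>a * real n\<rfloor>)"
      and "B \<equiv> (\<lambda>n::nat. real_of_int \<lfloor>b * real n\<rfloor>)"
      and "A' \<equiv> (\<lambda>n::nat. real_of_int \<lfloor>inverse a * real n\<rfloor>)"
      and "B' \<equiv> (\<lambda>n::nat. real_of_int \<lfloor>inverse b * real n\<rfloor>)"
  shows "(\<lambda>m. let n = Suc m in A (n + k) / A n - B (n + k) / B n) sums
           (real k * (ln a - ln b)
            + (\<Sum>j=1..k. frac (real j * frac a) - frac (real j * frac b))
            - (\<Sum>m. let n = Suc m in
                 (a * real k * frac (inverse a * real (n + 1))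
                  - b * real k * frac (inverse b * real (n + 1))) / (real n * real (n + 1)))
            - (\<Sum>m. let n = Suc m in
                 ((\<Sum>j=1..k. frac (frac a * (A' (n + 1) + real j)))
                  - (\<Sum>j=1..k. frac (frac b * (B' (n + 1) + real j)))) / (real n * real (n + 1))))"
proof -
  have a0: "a > 0" and b0: "b > 0" using assms by auto
  define u where "u = (\<lambda>m. (a * real k * frac (inverse a * real (Suc m + 1)) - b * real k * frac (inverse b * real (Suc m + 1))) / (real (Suc m) * real (Suc m + 1)))"
  define v where "v = (\<lambda>m. ((\<Sum>j=1..k. frac (frac a * (real_of_int \<lfloor>inverse a * real (Suc m + 1)\<rfloor> + real j))) - (\<Sum>j=1..k. frac (frac b * (real_of_int \<lfloor>inverse b * real (Suc m + 1)\<rfloor> + real j)))) / (real (Suc m) * real (Suc m + 1)))"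
  have su: "summable u" unfolding u_def
  proof (rule summ_bdd[where C="a * real k + b * real k"])
    fix m
    let ?x = "frac (inverse a * real (Suc m + 1))" and ?y = "frac (inverse b * real (Suc m + 1))"
    have x: "0 \<le> ?x" "?x \<le> 1" "0 \<le> ?y" "?y \<le> 1" by (simp_all add: less_imp_le frac_lt_1)
    have "0 \<le> a * real k * ?x" using x a0 by simp
    moreover have "a * real k * ?x \<le> a * real k * 1" by (rule mult_left_mono[OF x(2)]) (use a0 in simp)
    moreover have "0 \<le> b * real k * ?y" using x b0 by simp
    moreover have "b * real k * ?y \<le> b * real k * 1" by (rule mult_left_mono[OF x(4)]) (use b0 in simp)
    ultimately show "\<bar>a * real k * ?x - b * real k * ?y\<bar> \<le> a * real k + b * real k" by simp
  qed
  have sv: "summable v" unfolding v_def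
  proof (rule summ_bdd[where C="real k"])
    fix m
    let ?x = "\<Sum>j=1..k. frac (frac a * (real_of_int \<lfloor>inverse a * real (Suc m + 1)\<rfloor> + real j))"
    let ?y = "\<Sum>j=1..k. frac (frac b * (real_of_int \<lfloor>inverse b * real (Suc m + 1)\<rfloor> + real j))"
    have "0 \<le> ?x" "?x \<le> real k" "0 \<le> ?y" "?y \<le> real k" by (rule sumfr_bdd)+
    then show "\<bar>?x - ?y\<bar> \<le> real k" by simp
  qed
  have uv: "u m + v m = wa a k m - wa b k m" for m
    unfolding u_def v_def wa_def ya_def by (simp add: diff_divide_distrib add_divide_distrib)
  have W: "suminf (wa a k) - suminf (wa b k) = suminf u + suminf v"
    using suminf_add[OF su sv] suminf_diff[OF wa_summable[OF a0] wa_summable[OF b0]] uv by simp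
  have S: "(\<lambda>m. (Aa a (Suc m + k) / Aa a (Suc m) - 1 - real k / real (Suc m)) - (Aa b (Suc m + k) / Aa b (Suc m) - 1 - real k / real (Suc m))) sums
      ((real k + real k * ln a + (\<Sum>j=1..k. frac (real j * frac a)) - suminf (wa a k)) -
       (real k + real k * ln b + (\<Sum>j=1..k. frac (real j * frac b)) - suminf (wa b k)))"
    by (rule sums_diff[OF key[OF assms(1,3)] key[OF assms(2,4)]])
  have S2: "(\<lambda>m. A (Suc m + k) / A (Suc m) - B (Suc m + k) / B (Suc m)) sums
      (real k * (ln a - ln b) + (\<Sum>j=1..k. frac (real j * frac a) - frac (real j * frac b)) - suminf u - suminf v)"
  proof -
    have "(real k + real k * ln a + (\<Sum>j=1..k. frac (real j * frac a)) - suminf (wa a k)) -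
       (real k + real k * ln b + (\<Sum>j=1..k. frac (real j * frac b)) - suminf (wa b k))
      = real k * (ln a - ln b) + (\<Sum>j=1..k. frac (real j * frac a) - frac (real j * frac b)) - suminf u - suminf v"
      using W by (simp add: sum_subtractf algebra_simps)
    moreover have "(\<lambda>m. (Aa a (Suc m + k) / Aa a (Suc m) - 1 - real k / real (Suc m)) - (Aa b (Suc m + k) / Aa b (Suc m) - 1 - real k / real (Suc m)))
      = (\<lambda>m. A (Suc m + k) / A (Suc m) - B (Suc m + k) / B (Suc m))"
      unfolding A_def B_def Aa_def by (rule ext) simp
    ultimately show ?thesis using S by simp
  qed
  then show ?thesis unfolding Let_def u_def v_def A'_def B'_def by simp
qed

end
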